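(* Let $(X,f)$ be a dynamical system and let $S\subset X$ be a syndetically scrambled set for $f$ with $f(S)\subset S$ which contains a Cantor set $K$. Suppose that for every nonempty open $U\subset X$ there is $n\in\mathbb N$ with $f^n(K)\subset f^n(U)$. Then $f$ has a dense Mycielski set $T$ with $f(T)\subset T$ which is syndetically scrambled for $f$. Moreover, if $S$ is syndetically $\varepsilon$-scrambled, then so is $T$.
   Context: Dynamical system: compact metric space $X$ with metric $d$ and continuous $f$. Syndetic: subset of $\mathbb N$ meeting every set with arbitrarily long runs of consecutive integers. $\mathrm{Asy}(f)=\{(x,y):d(f^nx,f^ny)\to0\}$, $\mathrm{SProx}(f)=\{(x,y):\{n:d(f^nx,f^ny)<\eta\}$ syndetic for all $\eta>0\}$. A syndetically scrambled set has at least two points and all distinct pairs in $\mathrm{SProx}(f)\setminus\mathrm{Asy}(f)$; syndetically $\varepsilon$-scrambled if also $\limsup_n d(f^nx,f^ny)\ge\varepsilon$ for all distinct pairs. Cantor set: nonempty compact perfect totally disconnected; Mycielski set: countable union of Cantor sets. *)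

theory Defs
  imports "HOL-Analysis.Analysis"
begin

definition thick :: "nat set \<Rightarrow> bool" where
  "thick B \<longleftrightarrow> (\<forall>L. \<exists>m. {m..<m+L} \<subseteq> B)"

definition syndetic :: "nat set \<Rightarrow> bool" where
  "syndetic A \<longleftrightarrow> (\<forall>B. thick B \<longrightarrow> A \<inter> B \<noteq> {})"

definition Asy :: "('a::metric_space \<Rightarrow> 'a) \<Rightarrow> ('a \<times> 'a) set" where
  "Asy f = {(x, y). (\<lambda>n. dist ((f ^^ n) x) ((f ^^ n) y)) \<longlonglongrightarrow> 0}"

definition SProx :: "('a::metric_space \<Rightarrow> 'a) \<Rightarrow> ('a \<times> 'a) set" where
  "SProx f = {(x, y). \<forall>\<eta>>0. syndetic {n. dist ((f ^^ n) x) ((f ^^ n) y) < \<eta>}}"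

definition synd_scrambled :: "('a::metric_space \<Rightarrow> 'a) \<Rightarrow> 'a set \<Rightarrow> bool" where
  "synd_scrambled f S \<longleftrightarrow> (\<exists>x\<in>S. \<exists>y\<in>S. x \<noteq> y) \<and>
     (\<forall>x\<in>S. \<forall>y\<in>S. x \<noteq> y \<longrightarrow> (x, y) \<in> SProx f - Asy f)"

definition synd_eps_scrambled :: "('a::metric_space \<Rightarrow> 'a) \<Rightarrow> real \<Rightarrow> 'a set \<Rightarrow> bool" where
  "synd_eps_scrambled f \<epsilon> S \<longleftrightarrow> synd_scrambled f S \<and>
     (\<forall>x\<in>S. \<forall>y\<in>S. x \<noteq> y \<longrightarrow>
        limsup (\<lambda>n. ereal (dist ((f ^^ n) x) ((f ^^ n) y))) \<ge> ereal \<epsilon>)"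

definition totally_disconnected_set :: "'a::topological_space set \<Rightarrow> bool" where
  "totally_disconnected_set K \<longleftrightarrow> (\<forall>C\<subseteq>K. connected C \<longrightarrow> (\<exists>a. C \<subseteq> {a}))"

definition cantor_set :: "'a::metric_space set \<Rightarrow> bool" where
  "cantor_set K \<longleftrightarrow> K \<noteq> {} \<and> compact K \<and> (\<forall>x\<in>K. x islimpt K) \<and> totally_disconnected_set K"

definition mycielski_set :: "'a::metric_space set \<Rightarrow> bool" where
  "mycielski_set T \<longleftrightarrow> (\<exists>\<F>. countable \<F> \<and> (\<forall>C\<in>\<F>. cantor_set C) \<and> T = \<Union>\<F>)"

end

theory Submission
  imports Defs
begin


definition nd :: "'b::metric_space set \<Rightarrow> ('b\<times>'b) set \<Rightarrow> bool" where
 "nd Y R \<longleftrightarrow> (\<forall>W W'. open W \<longrightarrow> open W' \<longrightarrow> W\<inter>Y \<noteq> {} \<longrightarrow> W'\<inter>Y \<noteq> {} \<longrightarrow>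
    (\<exists>V V'. open V \<and> open V' \<and> V \<subseteq> W \<and> V' \<subseteq> W' \<and> V\<inter>Y\<noteq>{} \<and> V'\<inter>Y\<noteq>{} \<and>
       (closure V \<times> closure V') \<inter> R = {}))"

lemma nd_empty: "nd Y {}"
  unfolding nd_def by blast

lemma nd_Un: assumes "nd Y R1" "nd Y R2" shows "nd Y (R1 \<union> R2)"
  unfolding nd_def
proof (intro allI impI)
  fix W W' :: "'a set" assume W: "open W" "open W'" "W\<inter>Y \<noteq> {}" "W'\<inter>Y \<noteq> {}"
  then obtain V1 V1' where V1: "open V1" "open V1'" "V1 \<subseteq> W" "V1' \<subseteq> W'" "V1\<inter>Y\<noteq>{}" "V1'\<inter>Y\<noteq>{}"
     "(closure V1 \<times> closure V1') \<inter> R1 = {}" using assms(1)[unfolded nd_def, rule_format, OF W] by blast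
  then obtain V2 V2' where V2: "open V2" "open V2'" "V2 \<subseteq> V1" "V2' \<subseteq> V1'" "V2\<inter>Y\<noteq>{}" "V2'\<inter>Y\<noteq>{}"
     "(closure V2 \<times> closure V2') \<inter> R2 = {}" using assms(2)[unfolded nd_def, rule_format, OF V1(1,2,5,6)] by blast
  have "closure V2 \<subseteq> closure V1" "closure V2' \<subseteq> closure V1'" using closure_mono[OF V2(3)] closure_mono[OF V2(4)] by auto
  then have "(closure V2 \<times> closure V2') \<inter> (R1 \<union> R2) = {}" using V1(7) V2(7) by blast
  then show "\<exists>V V'. open V \<and> open V' \<and> V \<subseteq> W \<and> V' \<subseteq> W' \<and> V\<inter>Y\<noteq>{} \<and> V'\<inter>Y\<noteq>{} \<and>
       (closure V \<times> closure V') \<inter> (R1 \<union> R2) = {}"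
    using V1 V2 by (intro exI[of _ V2] exI[of _ V2']) auto
qed

lemma nd_UN: assumes "\<And>k. nd Y (R k)" shows "nd Y (\<Union>k<(n::nat). R k)"
proof (induction n)
  case 0 then show ?case using nd_empty by simp
next
  case (Suc n)
  have "(\<Union>k<Suc n. R k) = R n \<union> (\<Union>k<n. R k)" by (auto simp: lessThan_Suc)
  then show ?case using nd_Un[OF assms Suc.IH] by simp
qed

lemma nd_Id: assumes "\<And>y. y \<in> Y \<Longrightarrow> y islimpt Y" shows "nd Y Id"
  unfolding nd_def
proof (intro allI impI)
  fix W W' :: "'a set" assume W: "open W" "open W'" "W\<inter>Y \<noteq> {}" "W'\<inter>Y \<noteq> {}"
  obtain y where y: "y \<in> W" "y \<in> Y" using W by auto
  obtain y0 where y0: "y0 \<in> W'" "y0 \<in> Y" using W by auto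
  have "\<exists>y'. y' \<in> W' \<and> y' \<in> Y \<and> y' \<noteq> y"
  proof (cases "y0 = y")
    case False then show ?thesis using y0 by blast
  next
    case True
    then have "y islimpt Y" "y \<in> W'" using assms y y0 by auto
    then show ?thesis using W(2) by (meson islimptE)
  qed
  then obtain y' where y': "y' \<in> W'" "y' \<in> Y" "y' \<noteq> y" by blast
  define d where "d = dist y y'"
  have d: "d > 0" using y' by (simp add: d_def)
  define V where "V = W \<inter> ball y (d/3)"
  define V' where "V' = W' \<inter> ball y' (d/3)"
  have cV: "closure V \<subseteq> cball y (d/3)"
    by (rule closure_minimal) (auto simp: V_def)
  have cV': "closure V' \<subseteq> cball y' (d/3)"
    by (rule closure_minimal) (auto simp: V'_def)
  have "(closure V \<times> closure V') \<inter> Id = {}"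
  proof (rule ccontr)
    assume "(closure V \<times> closure V') \<inter> Id \<noteq> {}"
    then obtain z where "z \<in> closure V" "z \<in> closure V'" by auto
    then have "z \<in> cball y (d/3)" "z \<in> cball y' (d/3)" using cV cV' by auto
    then have "dist y y' \<le> 2*d/3" using dist_triangle[of y y' z]
      by (auto simp: dist_commute)
    then show False using d d_def by simp
  qed
  moreover have "y \<in> V" "y' \<in> V'" using y y' d by (auto simp: V_def V'_def)
  ultimately show "\<exists>V V'. open V \<and> open V' \<and> V \<subseteq> W \<and> V' \<subseteq> W' \<and> V\<inter>Y\<noteq>{} \<and> V'\<inter>Y\<noteq>{} \<and>
       (closure V \<times> closure V') \<inter> Id = {}"
    using W y y' by (intro exI[of _ V] exI[of _ V']) (auto simp: V_def V'_def)
qed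

lemma finite_baire:
  assumes "finite P" "open W" "W \<inter> Y \<noteq> {}" "W \<inter> Y \<subseteq> (\<Union>x\<in>P. A x)" "\<And>x. x\<in>P \<Longrightarrow> closed (A x)"
  shows "\<exists>x\<in>P. \<exists>V. open V \<and> V \<inter> Y \<noteq> {} \<and> V \<inter> Y \<subseteq> A x"
  using assms
proof (induction P arbitrary: W rule: finite_induct)
  case empty then show ?case by auto
next
  case (insert x P)
  show ?case
  proof (cases "(W - A x) \<inter> Y = {}")
    case True
    then show ?thesis using insert by blast
  next
    case False
    have "open (W - A x)" using insert by auto
    moreover have "(W - A x) \<inter> Y \<subseteq> (\<Union>x\<in>P. A x)" using insert.prems by auto
    ultimately show ?thesis using insert.IH[of "W - A x"] False insert.prems by auto
  qed
qed

lemma compact_nest_gen: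
  fixes h :: "nat \<Rightarrow> 'a::metric_space set"
  assumes "\<And>n. compact (h n)" "\<And>n. h n \<noteq> {}" "\<And>n. h (Suc n) \<subseteq> h n"
  shows "(\<Inter>n. h n) \<noteq> {}"
proof -
  have mono: "m \<le> n \<Longrightarrow> h n \<subseteq> h m" for m n
    by (rule lift_Suc_antimono_le[of h]) (use assms(3) in auto)
  have "h 0 \<inter> (\<Inter>i\<in>UNIV. h i) \<noteq> {}"
  proof (rule compact_imp_fip_image)
    show "compact (h 0)" by (rule assms(1))
    show "closed (h i)" for i using assms(1) compact_imp_closed by auto
    fix I' :: "nat set" assume I': "finite I'" "I' \<subseteq> UNIV"
    have "\<forall>i\<in>insert 0 I'. h (Max (insert 0 I')) \<subseteq> h i"
      using I' by (intro ballI mono Max_ge) auto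
    then have "h (Max (insert 0 I')) \<subseteq> h 0 \<inter> (\<Inter>i\<in>I'. h i)" by blast
    then show "h 0 \<inter> (\<Inter>i\<in>I'. h i) \<noteq> {}" using assms(2) by blast
  qed
  then show ?thesis by auto
qed



locale fus =
  fixes F :: "'a::metric_space set" and g :: "'a \<Rightarrow> 'b::metric_space"
  assumes cF: "compact F" and cg: "continuous_on F g"
    and perf: "\<And>y. y \<in> g`F \<Longrightarrow> y islimpt g`F" and neF: "F \<noteq> {}"
begin

definition good where
  "good E \<longleftrightarrow> compact E \<and> E \<subseteq> F \<and> (\<exists>V. open V \<and> V \<inter> g`F \<noteq> {} \<and> V \<inter> g`F \<subseteq> g`E)"

lemma good_ne: "good E \<Longrightarrow> E \<noteq> {}"
  unfolding good_def by auto

lemma good_F: "good F"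
  unfolding good_def using cF neF by (intro conjI exI[of _ UNIV]) auto

lemma shrink:
  assumes "good E" "\<epsilon> > 0"
  shows "\<exists>E'. E' \<subseteq> E \<and> good E' \<and> (\<forall>x\<in>E'. \<forall>y\<in>E'. dist x y \<le> \<epsilon>)"
proof -
  from assms(1) have cE: "compact E" and EF: "E \<subseteq> F" unfolding good_def by auto
  from assms(1) obtain W where W: "open W" "W \<inter> g`F \<noteq> {}" "W \<inter> g`F \<subseteq> g`E" unfolding good_def by auto
  obtain k where k: "finite k" "k \<subseteq> E" "E \<subseteq> (\<Union>x\<in>k. ball x (\<epsilon>/2))"
    using seq_compact_imp_totally_bounded[OF compact_imp_seq_compact[OF cE]] assms(2)
    by (meson half_gt_zero)
  define A where "A x = g ` (E \<inter> cball x (\<epsilon>/2))" for x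
  have cgE: "continuous_on (E \<inter> cball x (\<epsilon>/2)) g" for x
    using cg EF continuous_on_subset by blast
  have clA: "closed (A x)" for x
    unfolding A_def using cE cgE
    by (intro compact_imp_closed compact_continuous_image) auto
  have cov: "W \<inter> g`F \<subseteq> (\<Union>x\<in>k. A x)"
  proof
    fix y assume "y \<in> W \<inter> g`F"
    then obtain e where e: "e \<in> E" "y = g e" using W by auto
    then obtain x where x: "x \<in> k" "e \<in> ball x (\<epsilon>/2)" using k by auto
    then have "e \<in> E \<inter> cball x (\<epsilon>/2)" using e by auto
    then have "y \<in> A x" unfolding A_def using e by blast
    then show "y \<in> (\<Union>x\<in>k. A x)" using x by blast
  qed
  have clA': "\<And>x. x \<in> k \<Longrightarrow> closed (A x)" using clA by blast
  have "\<exists>x\<in>k. \<exists>V. open V \<and> V \<inter> g`F \<noteq> {} \<and> V \<inter> g`F \<subseteq> A x"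
    by (rule finite_baire[OF k(1) W(1,2) cov clA'])
  then obtain x V where xV: "x \<in> k" "open V" "V \<inter> g`F \<noteq> {}" "V \<inter> g`F \<subseteq> A x"
    by blast
  define E' where "E' = E \<inter> cball x (\<epsilon>/2)"
  have "good E'" unfolding good_def E'_def
    using xV cE EF by (intro conjI exI[of _ V]) (auto simp: A_def)
  moreover have "\<forall>a\<in>E'. \<forall>b\<in>E'. dist a b \<le> \<epsilon>"
  proof (intro ballI)
    fix a b assume "a \<in> E'" "b \<in> E'"
    then have "dist x a \<le> \<epsilon>/2" "dist x b \<le> \<epsilon>/2" by (auto simp: E'_def)
    then show "dist a b \<le> \<epsilon>" using dist_triangle[of a b x] by (simp add: dist_commute)
  qed
  ultimately show ?thesis by (intro exI[of _ E']) (auto simp: E'_def)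
qed

lemma avoid2:
  assumes "good E1" "good E2" "nd (g`F) R"
  shows "\<exists>E1' E2'. E1' \<subseteq> E1 \<and> E2' \<subseteq> E2 \<and> good E1' \<and> good E2' \<and> (g`E1' \<times> g`E2') \<inter> R = {}"
proof -
  from assms(1) obtain W1 where W1: "open W1" "W1 \<inter> g`F \<noteq> {}" "W1 \<inter> g`F \<subseteq> g`E1" unfolding good_def by auto
  from assms(2) obtain W2 where W2: "open W2" "W2 \<inter> g`F \<noteq> {}" "W2 \<inter> g`F \<subseteq> g`E2" unfolding good_def by auto
  obtain V1 V2 where V: "open V1" "open V2" "V1 \<subseteq> W1" "V2 \<subseteq> W2" "V1 \<inter> g`F \<noteq> {}" "V2 \<inter> g`F \<noteq> {}"
    "(closure V1 \<times> closure V2) \<inter> R = {}"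
    using assms(3)[unfolded nd_def, rule_format, OF W1(1) W2(1) W1(2) W2(2)] by blast
  have gen: "good (E \<inter> g -` closure V) \<and> g ` (E \<inter> g -` closure V) \<subseteq> closure V"
    if gE: "good E" "open W" "W \<inter> g`F \<subseteq> g`E" "open V" "V \<subseteq> W" "V \<inter> g`F \<noteq> {}" for E W V
  proof -
    have cE: "compact E" "E \<subseteq> F" using gE unfolding good_def by auto
    then have "continuous_on E g" using cg continuous_on_subset by blast
    then have "compact (E \<inter> g -` closure V)"
      using closedin_compact[OF cE(1) continuous_closedin_preimage] by blast
    moreover have "V \<inter> g`F \<subseteq> g ` (E \<inter> g -` closure V)"
    proof
      fix y assume y: "y \<in> V \<inter> g`F"
      then obtain e where "e \<in> E" "y = g e" using gE by blast
      then show "y \<in> g ` (E \<inter> g -` closure V)" using y closure_subset by blast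
    qed
    ultimately show ?thesis using gE cE unfolding good_def by (intro conjI exI[of _ V]) auto
  qed
  define E1' where "E1' = E1 \<inter> g -` closure V1"
  define E2' where "E2' = E2 \<inter> g -` closure V2"
  have g1: "good E1'" "g`E1' \<subseteq> closure V1"
    using gen[OF assms(1) W1(1) W1(3) V(1) V(3) V(5)] unfolding E1'_def by blast+
  have g2: "good E2'" "g`E2' \<subseteq> closure V2"
    using gen[OF assms(2) W2(1) W2(3) V(2) V(4) V(6)] unfolding E2'_def by blast+
  have "(g`E1' \<times> g`E2') \<inter> R = {}" using g1(2) g2(2) V(7) by blast
  moreover have "E1' \<subseteq> E1" "E2' \<subseteq> E2" by (auto simp: E1'_def E2'_def)
  ultimately show ?thesis using g1 g2 by blast
qed

lemma avoid_fam:
  assumes "finite P" "\<And>i j. (i,j)\<in>P \<Longrightarrow> i \<noteq> j \<and> i\<in>I \<and> j\<in>I" "\<And>i. i\<in>I \<Longrightarrow> good (E i)"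
    "nd (g`F) R"
  shows "\<exists>E'. (\<forall>i\<in>I. E' i \<subseteq> E i \<and> good (E' i)) \<and> (\<forall>(i,j)\<in>P. (g`E' i \<times> g`E' j) \<inter> R = {})"
  using assms(1,2)
proof (induction P rule: finite_induct)
  case empty then show ?case using assms(3) by (intro exI[of _ E]) auto
next
  case (insert p P)
  obtain i j where p: "p = (i,j)" by fastforce
  have ij: "i \<noteq> j" "i \<in> I" "j \<in> I" using insert.prems p by auto
  have IHp: "\<And>i j. (i,j)\<in>P \<Longrightarrow> i \<noteq> j \<and> i\<in>I \<and> j\<in>I" using insert.prems by auto
  obtain E' where E': "\<forall>i\<in>I. E' i \<subseteq> E i \<and> good (E' i)" "\<forall>(i,j)\<in>P. (g`E' i \<times> g`E' j) \<inter> R = {}"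
    using insert.IH[OF IHp] by blast
  obtain E1 E2 where E12: "E1 \<subseteq> E' i" "E2 \<subseteq> E' j" "good E1" "good E2" "(g`E1 \<times> g`E2) \<inter> R = {}"
    using avoid2[of "E' i" "E' j" R] E' ij assms(4) by blast
  define E'' where "E'' = E'(i := E1, j := E2)"
  have sub: "E'' k \<subseteq> E' k" for k using E12 by (auto simp: E''_def)
  have cases3: "E'' k = E1 \<or> E'' k = E2 \<or> E'' k = E' k" for k by (auto simp: E''_def)
  have "\<forall>k\<in>I. E'' k \<subseteq> E k \<and> good (E'' k)"
  proof
    fix k assume k: "k \<in> I"
    have "E'' k \<subseteq> E k" using sub[of k] E'(1) k by blast
    moreover have "good (E'' k)"
    proof -
      consider "E'' k = E1" | "E'' k = E2" | "E'' k = E' k" using cases3[of k] by blast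
      then show ?thesis using E'(1) k E12 by cases auto
    qed
    ultimately show "E'' k \<subseteq> E k \<and> good (E'' k)" by blast
  qed
  moreover have "\<forall>(a,b)\<in>P. (g`E'' a \<times> g`E'' b) \<inter> R = {}"
  proof -
    { fix a b assume ab: "(a,b) \<in> P"
      have "(g`E' a \<times> g`E' b) \<inter> R = {}" using E'(2) ab by blast
      then have "(g`E'' a \<times> g`E'' b) \<inter> R = {}" using sub[of a] sub[of b] by blast }
    then show ?thesis by blast
  qed
  moreover have "(g`E'' i \<times> g`E'' j) \<inter> R = {}" using E12 ij by (simp add: E''_def)
  ultimately show ?case using p by (intro exI[of _ E'']) auto
qed

end


context fus begin

lemma step:
  fixes A :: "bool list \<Rightarrow> 'a set"
  assumes "\<forall>s. length s = n \<longrightarrow> good (A s)" "nd (g`F) R" "\<epsilon> > 0"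
  shows "\<exists>B. (\<forall>s. length s = Suc n \<longrightarrow> B s \<subseteq> A (butlast s) \<and> good (B s) \<and>
              (\<forall>x\<in>B s. \<forall>y\<in>B s. dist x y \<le> \<epsilon>)) \<and>
            (\<forall>s t. length s = Suc n \<longrightarrow> length t = Suc n \<longrightarrow> s \<noteq> t \<longrightarrow> (g`B s \<times> g`B t) \<inter> R = {})"
proof -
  define B0 where "B0 s = (SOME E'. E' \<subseteq> A (butlast s) \<and> good E' \<and> (\<forall>x\<in>E'. \<forall>y\<in>E'. dist x y \<le> \<epsilon>))"
    for s :: "bool list"
  have B0: "B0 s \<subseteq> A (butlast s) \<and> good (B0 s) \<and> (\<forall>x\<in>B0 s. \<forall>y\<in>B0 s. dist x y \<le> \<epsilon>)"
    if "length s = Suc n" for s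
  proof -
    have "good (A (butlast s))" using assms(1) that by simp
    then have "\<exists>E'. E' \<subseteq> A (butlast s) \<and> good E' \<and> (\<forall>x\<in>E'. \<forall>y\<in>E'. dist x y \<le> \<epsilon>)"
      using shrink assms(3) by blast
    then show ?thesis unfolding B0_def by (rule someI_ex)
  qed
  define I where "I = {s::bool list. length s = Suc n}"
  have finI: "finite I" using finite_lists_length_eq[of "UNIV::bool set" "Suc n"] by (simp add: I_def)
  define P where "P = {(s,t). s \<in> I \<and> t \<in> I \<and> s \<noteq> t}"
  have finP: "finite P" by (rule finite_subset[of _ "I \<times> I"]) (use finI in \<open>auto simp: P_def\<close>)
  obtain E' where E': "\<forall>i\<in>I. E' i \<subseteq> B0 i \<and> good (E' i)" "\<forall>(i,j)\<in>P. (g`E' i \<times> g`E' j) \<inter> R = {}"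
    using avoid_fam[OF finP _ _ assms(2), of I B0] B0 by (auto simp: P_def I_def)
  show ?thesis
  proof (intro exI[of _ E'] conjI allI impI)
    fix s :: "bool list" assume s: "length s = Suc n"
    then have "s \<in> I" by (simp add: I_def)
    then show "E' s \<subseteq> A (butlast s)" "good (E' s)" "\<forall>x\<in>E' s. \<forall>y\<in>E' s. dist x y \<le> \<epsilon>"
      using E'(1) B0[OF s] by blast+
  next
    fix s t :: "bool list" assume "length s = Suc n" "length t = Suc n" "s \<noteq> t"
    then have "(s,t) \<in> P" by (simp add: P_def I_def)
    then show "(g`E' s \<times> g`E' t) \<inter> R = {}" using E'(2) by blast
  qed
qed

theorem fusion:
  fixes R :: "nat \<Rightarrow> ('b \<times> 'b) set"
  assumes ndR: "\<And>k. nd (g`F) (R k)"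
  shows "\<exists>Cs::nat \<Rightarrow> 'a set. (\<forall>j. cantor_set (Cs j) \<and> Cs j \<subseteq> F) \<and>
     (\<forall>i j. i \<noteq> j \<longrightarrow> Cs i \<inter> Cs j = {}) \<and>
     (\<forall>x\<in>\<Union>(range Cs). \<forall>y\<in>\<Union>(range Cs). x \<noteq> y \<longrightarrow> g x \<noteq> g y \<and> (\<forall>k. (g x, g y) \<notin> R k))"
proof -
  define Q where "Q n = Id \<union> (\<Union>k<n. R k)" for n
  have ndQ: "nd (g`F) (Q n)" for n
    unfolding Q_def by (intro nd_Un nd_Id nd_UN ndR perf)
  define P where "P n A B \<longleftrightarrow> (\<forall>s. length s = Suc n \<longrightarrow> B s \<subseteq> A (butlast s) \<and> good (B s) \<and>
              (\<forall>x\<in>B s. \<forall>y\<in>B s. dist x y \<le> (1/2::real)^n)) \<and>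
            (\<forall>s t. length s = Suc n \<longrightarrow> length t = Suc n \<longrightarrow> s \<noteq> t \<longrightarrow> (g`B s \<times> g`B t) \<inter> Q n = {})"
    for n and A B :: "bool list \<Rightarrow> 'a set"
  define lv where "lv = rec_nat (\<lambda>s::bool list. F) (\<lambda>n A. SOME B. P n A B)"
  have lv0: "lv 0 = (\<lambda>s. F)" and lvS: "lv (Suc n) = (SOME B. P n (lv n) B)" for n
    by (simp_all add: lv_def)
  have inv: "\<forall>s. length s = n \<longrightarrow> good (lv n s)" for n
  proof (induction n)
    case 0 then show ?case using good_F lv0 by simp
  next
    case (Suc n)
    have "\<exists>B. P n (lv n) B" unfolding P_def by (rule step[OF Suc ndQ]) simp
    then have "P n (lv n) (lv (Suc n))" unfolding lvS by (rule someI_ex)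
    then show ?case unfolding P_def by blast
  qed
  have Pn: "P n (lv n) (lv (Suc n))" for n
  proof -
    have "\<exists>B. P n (lv n) B" unfolding P_def by (rule step[OF inv ndQ]) simp
    then show ?thesis unfolding lvS by (rule someI_ex)
  qed
  define E where "E s = lv (length s) s" for s
  have Eg: "good (E s)" for s using inv unfolding E_def by blast
  have EF: "E s \<subseteq> F" for s using Eg unfolding good_def by blast
  have Ec: "compact (E s)" for s using Eg unfolding good_def by blast
  have Pn1: "lv (Suc n) s \<subseteq> lv n (butlast s)" "good (lv (Suc n) s)"
     "\<forall>x\<in>lv (Suc n) s. \<forall>y\<in>lv (Suc n) s. dist x y \<le> (1/2)^n" if "length s = Suc n" for n s
    using Pn[of n] that unfolding P_def by blast+
  have Pn2: "(g`lv (Suc n) s \<times> g`lv (Suc n) t) \<inter> Q n = {}"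
    if "length s = Suc n" "length t = Suc n" "s \<noteq> t" for n s t
    using Pn[of n] that unfolding P_def by blast
  have Esnoc: "E (s@[b]) \<subseteq> E s" for s b
    using Pn1(1)[of "s@[b]" "length s"] by (simp add: E_def)
  have Ediam: "dist x y \<le> (1/2)^n" if "length s = Suc n" "x \<in> E s" "y \<in> E s" for s n x y
    using Pn1(3)[of s n] that by (simp add: E_def)
  have Esep: "(g`E s \<times> g`E t) \<inter> Q n = {}" if "length s = Suc n" "length t = Suc n" "s \<noteq> t" for s t n
    using Pn2[of s n t] that by (simp add: E_def)
  have Edisj: "E s \<inter> E t = {}" if "length s = length t" "s \<noteq> t" for s t
  proof -
    have "length s \<noteq> 0"
    proof
      assume "length s = 0"
      then have "s = []" "t = []" using that(1) by auto
      then show False using that(2) by simp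
    qed
    then obtain n where n: "length s = Suc n" using not0_implies_Suc by blast
    have "(g`E s \<times> g`E t) \<inter> Q n = {}" using Esep[OF n _ that(2)] n that(1) by simp
    then show ?thesis unfolding Q_def by auto
  qed
  have Etake: "E s \<subseteq> E (take k s)" for s k
  proof (induction s rule: rev_induct)
    case Nil then show ?case by simp
  next
    case (snoc x xs)
    show ?case
    proof (cases "k \<le> length xs")
      case True
      then have "take k (xs @ [x]) = take k xs" by simp
      then show ?thesis using snoc Esnoc[of xs x] by auto
    next
      case False
      then have "take k (xs @ [x]) = xs @ [x]" by simp
      then show ?thesis by simp
    qed
  qed
  define C0 where "C0 = (\<Inter>n. \<Union>s\<in>{s. length s = n}. E s)"
  have finL: "finite {s::bool list. length s = n}" for n
    using finite_lists_length_eq[of "UNIV::bool set" n] by simp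
  have memC0: "\<exists>s. length s = n \<and> x \<in> E s" if "x \<in> C0" for x n
    using that unfolding C0_def by blast
  have clC0: "closed C0"
    unfolding C0_def using finL Ec by (intro closed_INT ballI compact_imp_closed compact_UN) auto
  have meet: "C0 \<inter> E s \<noteq> {}" for s
  proof -
    define h where "h m = E (s @ replicate m False)" for m
    have "(\<Inter>m. h m) \<noteq> {}"
    proof (rule compact_nest_gen)
      show "compact (h n)" "h n \<noteq> {}" for n using Ec Eg good_ne unfolding h_def by auto
      show "h (Suc n) \<subseteq> h n" for n
        using Esnoc[of "s @ replicate n False" False] unfolding h_def
        by (simp add: replicate_append_same[symmetric])
    qed
    then obtain z where z: "\<And>m. z \<in> h m" by blast
    have "z \<in> C0" unfolding C0_def
    proof
      fix n
      have "z \<in> E (take n (s @ replicate n False))" using z[of n] Etake unfolding h_def by blast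
      moreover have "length (take n (s @ replicate n False)) = n" by simp
      ultimately show "z \<in> (\<Union>s\<in>{s. length s = n}. E s)" by blast
    qed
    moreover have "z \<in> E s" using z[of 0] by (simp add: h_def)
    ultimately show ?thesis by blast
  qed
  have sepx: "\<exists>N. \<forall>n\<ge>N. \<forall>s t. length s = Suc n \<longrightarrow> length t = Suc n \<longrightarrow> x \<in> E s \<longrightarrow> y \<in> E t \<longrightarrow> s \<noteq> t"
    if xy0: "x \<noteq> y" for x y
  proof -
    obtain N where N: "(1/2::real)^N < dist x y"
      using real_arch_pow_inv[of "dist x y" "1/2"] xy0 by auto
    show ?thesis
    proof (intro exI[of _ N] allI impI)
      fix n s t assume st: "N \<le> n" "length s = Suc n" "length t = Suc n" "x \<in> E s" "y \<in> E t"
      have le: "(1/2::real)^n \<le> (1/2)^N" using st(1) by (simp add: power_decreasing)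
      show "s \<noteq> t"
      proof
        assume "s = t"
        then have "dist x y \<le> (1/2)^n" using Ediam[of s n x y] st by simp
        then show False using le N by linarith
      qed
    qed
  qed
  have sepg: "g x \<noteq> g y \<and> (g x, g y) \<notin> R k" if sg: "x \<in> C0" "y \<in> C0" "x \<noteq> y" for x y k
  proof -
    obtain N where N: "\<forall>n\<ge>N. \<forall>s t. length s = Suc n \<longrightarrow> length t = Suc n \<longrightarrow> x \<in> E s \<longrightarrow> y \<in> E t \<longrightarrow> s \<noteq> t"
      using sepx[OF sg(3)] by blast
    define n where "n = N + k + 1"
    obtain s where "length s = Suc n" "x \<in> E s" using memC0[OF sg(1)] by blast
    moreover obtain t where "length t = Suc n" "y \<in> E t" using memC0[OF sg(2)] by blast
    ultimately have st: "length s = Suc n" "x \<in> E s" "length t = Suc n" "y \<in> E t" by blast+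
    have "s \<noteq> t" by (rule N[rule_format]) (use st n_def in auto)
    then have "(g`E s \<times> g`E t) \<inter> Q n = {}" using Esep st by blast
    moreover have "R k \<subseteq> Q n" "Id \<subseteq> Q n" using n_def by (auto simp: Q_def)
    ultimately show ?thesis using st by blast
  qed
  have cant: "cantor_set (C0 \<inter> E s)" for s
    unfolding cantor_set_def
  proof (intro conjI ballI)
    show "C0 \<inter> E s \<noteq> {}" by (rule meet)
    show "compact (C0 \<inter> E s)" using compact_Int_closed[OF Ec clC0] by (simp add: Int_commute)
  next
    fix x assume x: "x \<in> C0 \<inter> E s"
    show "x islimpt C0 \<inter> E s" unfolding islimpt_approachable
    proof (intro allI impI)
      fix \<epsilon> :: real assume "\<epsilon> > 0"
      then obtain n0 where n0: "(1/2::real)^n0 < \<epsilon>"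
        using real_arch_pow_inv[of \<epsilon> "1/2"] by auto
      define n where "n = n0 + length s"
      obtain u where u: "length u = Suc (Suc n)" "x \<in> E u" using memC0 x by blast
      have "x \<in> E (take (length s) u)" using u Etake by blast
      moreover have "length (take (length s) u) = length s" using u n_def by simp
      ultimately have tu: "take (length s) u = s" using Edisj x by blast
      define u' where "u' = butlast u @ [\<not> last u]"
      have "u \<noteq> []" using u by auto
      then have uu: "u = butlast u @ [last u]" by simp
      have lb: "length (butlast u) = Suc n" using u by simp
      have u'ne: "u' \<noteq> u"
      proof
        assume "u' = u"
        then have "last u' = last u" by simp
        then show False by (simp add: u'_def)
      qed
      have lu': "length u' = length u" using u'_def u by simp
      have "take (length s) u' = take (length s) (butlast u)" unfolding u'_def using lb n_def by simp
      also have "\<dots> = take (length s) u" using lb n_def by (subst uu) simp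
      finally have "take (length s) u' = s" using tu by simp
      then have "E u' \<subseteq> E s" using Etake[of u' "length s"] by simp
      obtain z where z: "z \<in> C0" "z \<in> E u'" using meet by blast
      have zx: "z \<noteq> x" using Edisj[OF lu' u'ne] z u by blast
      have "E u' \<subseteq> E (butlast u)" unfolding u'_def by (rule Esnoc)
      moreover have "E u \<subseteq> E (butlast u)" using Esnoc[of "butlast u" "last u"] uu by simp
      ultimately have "z \<in> E (butlast u)" "x \<in> E (butlast u)" using z u by blast+
      then have "dist z x \<le> (1/2)^n" using Ediam lb by blast
      moreover have "(1/2::real)^n \<le> (1/2)^n0" unfolding n_def by (simp add: power_decreasing)
      ultimately have "dist z x < \<epsilon>" using n0 by linarith
      then show "\<exists>x'\<in>C0 \<inter> E s. x' \<noteq> x \<and> dist x' x < \<epsilon>"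
        using z zx \<open>E u' \<subseteq> E s\<close> by blast
    qed
  next
    show "totally_disconnected_set (C0 \<inter> E s)" unfolding totally_disconnected_set_def
    proof (intro allI impI)
      fix Z assume Z: "Z \<subseteq> C0 \<inter> E s" "connected Z"
      show "\<exists>a. Z \<subseteq> {a}"
      proof (rule ccontr)
        assume "\<nexists>a. Z \<subseteq> {a}"
        then obtain x y where xy: "x \<in> Z" "y \<in> Z" "x \<noteq> y" by blast
        obtain N where N: "\<forall>n\<ge>N. \<forall>s t. length s = Suc n \<longrightarrow> length t = Suc n \<longrightarrow> x \<in> E s \<longrightarrow> y \<in> E t \<longrightarrow> s \<noteq> t"
          using sepx[OF xy(3)] by blast
        obtain s1 t1 where st: "length s1 = Suc N" "x \<in> E s1" "length t1 = Suc N" "y \<in> E t1"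
          using memC0[of x "Suc N"] memC0[of y "Suc N"] xy Z by blast
        have "s1 \<noteq> t1" by (rule N[rule_format]) (use st in auto)
        define B where "B = (\<Union>t\<in>{t. length t = Suc N \<and> t \<noteq> s1}. E t)"
        have clB: "closed B" unfolding B_def
          using finL[of "Suc N"] Ec
          by (intro compact_imp_closed compact_UN) (auto intro: finite_subset[of _ "{t. length t = Suc N}"])
        have ZB: "Z \<subseteq> E s1 \<union> B"
        proof
          fix z assume "z \<in> Z"
          then obtain t where "length t = Suc N" "z \<in> E t" using memC0[of z "Suc N"] Z by blast
          then show "z \<in> E s1 \<union> B" unfolding B_def by (cases "t = s1") auto
        qed
        have disB: "E s1 \<inter> B = {}"
        proof -
          have "E s1 \<inter> E t = {}" if "length t = Suc N" "t \<noteq> s1" for t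
            using Edisj[of s1 t] st(1) that by simp
          then show ?thesis unfolding B_def by blast
        qed
        have m1: "E s1 \<inter> Z \<noteq> {}" using st(2) xy(1) by blast
        have "y \<in> B" unfolding B_def using st(3,4) \<open>s1 \<noteq> t1\<close> by blast
        then have m2: "B \<inter> Z \<noteq> {}" using xy(2) by blast
        have "\<exists>A B'. closed A \<and> closed B' \<and> Z \<subseteq> A \<union> B' \<and> A \<inter> B' \<inter> Z = {} \<and> A \<inter> Z \<noteq> {} \<and> B' \<inter> Z \<noteq> {}"
        proof (intro exI conjI)
          show "closed (E s1)" using compact_imp_closed[OF Ec[of s1]] .
          show "closed B" by (rule clB)
          show "Z \<subseteq> E s1 \<union> B" by (rule ZB)
          show "E s1 \<inter> B \<inter> Z = {}" using disB by blast
          show "E s1 \<inter> Z \<noteq> {}" by (rule m1)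
          show "B \<inter> Z \<noteq> {}" by (rule m2)
        qed
        then show False using Z(2) unfolding connected_closed by blast
      qed
    qed
  qed
  define Cs where "Cs j = C0 \<inter> E (replicate j False @ [True])" for j
  have p1: "\<forall>j. cantor_set (Cs j) \<and> Cs j \<subseteq> F"
    unfolding Cs_def using cant EF by blast
  have key: "Cs i \<inter> Cs j = {}" if "i < j" for i j
  proof -
    have t: "take (Suc i) (replicate j False @ [True]) = replicate (Suc i) False"
      using that by simp
    have "replicate (Suc i) False \<noteq> replicate i False @ [True]"
    proof
      assume "replicate (Suc i) False = replicate i False @ [True]"
      moreover have "replicate (Suc i) False ! i = False" by (rule nth_replicate) simp
      moreover have "(replicate i False @ [True]) ! i = True" by (simp add: nth_append)
      ultimately show False by simp
    qed
    then have d: "E (replicate (Suc i) False) \<inter> E (replicate i False @ [True]) = {}"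
      by (intro Edisj) auto
    have sub: "E (replicate j False @ [True]) \<subseteq> E (replicate (Suc i) False)"
      using Etake[of "replicate j False @ [True]" "Suc i"] t by simp
    have "Cs i \<subseteq> E (replicate i False @ [True])" "Cs j \<subseteq> E (replicate (Suc i) False)"
      unfolding Cs_def using sub by auto
    then show ?thesis using d by blast
  qed
  have p2: "\<forall>i j. i \<noteq> j \<longrightarrow> Cs i \<inter> Cs j = {}"
  proof (intro allI impI)
    fix i j :: nat assume "i \<noteq> j"
    then consider "i < j" | "j < i" by linarith
    then show "Cs i \<inter> Cs j = {}"
    proof cases
      case 1 then show ?thesis by (rule key)
    next
      case 2 then show ?thesis using key[of j i] by blast
    qed
  qed
  have p3: "\<forall>x\<in>\<Union>(range Cs). \<forall>y\<in>\<Union>(range Cs). x \<noteq> y \<longrightarrow> g x \<noteq> g y \<and> (\<forall>k. (g x, g y) \<notin> R k)"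
  proof (intro ballI impI)
    fix x y assume "x \<in> \<Union>(range Cs)" "y \<in> \<Union>(range Cs)" "x \<noteq> y"
    then have "x \<in> C0" "y \<in> C0" unfolding Cs_def by auto
    then show "g x \<noteq> g y \<and> (\<forall>k. (g x, g y) \<notin> R k)" using sepg \<open>x \<noteq> y\<close> by blast
  qed
  show ?thesis using p1 p2 p3 by blast
qed

end


lemma iter_cont:
  assumes "continuous_on X f" "f ` X \<subseteq> X"
  shows "continuous_on X (f^^n) \<and> (f^^n) ` X \<subseteq> X"
proof (induction n)
  case 0 then show ?case by (simp add: continuous_on_id)
next
  case (Suc n)
  have "continuous_on ((f^^n) ` X) f" using Suc assms(1) continuous_on_subset by blast
  then have "continuous_on X (f \<circ> (f^^n))"
    using Suc continuous_on_compose by blast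
  then show ?case using Suc assms by auto
qed

lemma iter_sub: "f ` S \<subseteq> S \<Longrightarrow> (f^^n) ` S \<subseteq> S"
  by (induction n) auto

lemma thick_tail: "thick B \<Longrightarrow> thick (B \<inter> {N..})"
  unfolding thick_def
proof
  fix L assume "\<forall>L. \<exists>m. {m..<m+L} \<subseteq> B"
  then obtain m where "{m..<m+(N+L)} \<subseteq> B" by blast
  then have "{m+N..<m+N+L} \<subseteq> B \<inter> {N..}" by auto
  then show "\<exists>m. {m..<m+L} \<subseteq> B \<inter> {N..}" by blast
qed

lemma syndetic_tail:
  assumes "syndetic A" "\<And>n. n \<ge> N \<Longrightarrow> n \<in> A \<Longrightarrow> n \<in> A'"
  shows "syndetic A'"
  unfolding syndetic_def
proof (intro allI impI)
  fix B assume "thick B"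
  then have "A \<inter> (B \<inter> {N..}) \<noteq> {}" using assms(1) thick_tail unfolding syndetic_def by blast
  then show "A' \<inter> B \<noteq> {}" using assms(2) by auto
qed

lemma transfer:
  fixes f :: "'a::metric_space \<Rightarrow> 'a"
  assumes "(p,q) \<in> SProx f - Asy f" "\<forall>n\<ge>N. (f^^n) x = (f^^n) p" "\<forall>n\<ge>N. (f^^n) y = (f^^n) q"
  shows "(x,y) \<in> SProx f - Asy f"
    "limsup (\<lambda>n. ereal (dist ((f^^n) x) ((f^^n) y))) = limsup (\<lambda>n. ereal (dist ((f^^n) p) ((f^^n) q)))"
proof -
  have eq: "n \<ge> N \<Longrightarrow> dist ((f^^n) x) ((f^^n) y) = dist ((f^^n) p) ((f^^n) q)" for n
    using assms by simp
  have ev: "eventually (\<lambda>n. dist ((f^^n) x) ((f^^n) y) = dist ((f^^n) p) ((f^^n) q)) sequentially"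
    using eq unfolding eventually_sequentially by blast
  have "(x,y) \<in> SProx f" unfolding SProx_def
  proof (clarify)
    fix \<eta> :: real assume "\<eta> > 0"
    then have "syndetic {n. dist ((f^^n) p) ((f^^n) q) < \<eta>}" using assms(1) unfolding SProx_def by auto
    then show "syndetic {n. dist ((f^^n) x) ((f^^n) y) < \<eta>}"
      by (rule syndetic_tail[where N=N]) (use eq in auto)
  qed
  moreover have "(x,y) \<notin> Asy f"
  proof
    assume "(x,y) \<in> Asy f"
    then have "(\<lambda>n. dist ((f^^n) x) ((f^^n) y)) \<longlonglongrightarrow> 0" unfolding Asy_def by auto
    then have "(\<lambda>n. dist ((f^^n) p) ((f^^n) q)) \<longlonglongrightarrow> 0" using tendsto_cong[OF ev] by blast
    then show False using assms(1) unfolding Asy_def by auto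
  qed
  ultimately show "(x,y) \<in> SProx f - Asy f" by blast
  have ev2: "eventually (\<lambda>n. ereal (dist ((f^^n) x) ((f^^n) y)) = ereal (dist ((f^^n) p) ((f^^n) q))) sequentially"
    using ev by (rule eventually_mono) simp
  show "limsup (\<lambda>n. ereal (dist ((f^^n) x) ((f^^n) y))) = limsup (\<lambda>n. ereal (dist ((f^^n) p) ((f^^n) q)))"
    using Limsup_eq[OF ev2] .
qed

lemma inj_iter:
  fixes f :: "'a::metric_space \<Rightarrow> 'a"
  assumes "synd_scrambled f S" "x \<in> S" "y \<in> S" "(f^^n) x = (f^^n) y"
  shows "x = y"
proof (rule ccontr)
  assume "x \<noteq> y"
  then have "(x,y) \<notin> Asy f" using assms unfolding synd_scrambled_def by blast
  moreover have "eventually (\<lambda>m. dist ((f^^m) x) ((f^^m) y) = 0) sequentially"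
    unfolding eventually_sequentially
  proof (intro exI[of _ n] allI impI)
    fix m assume "n \<le> m"
    then have "f^^m = f^^(m-n) \<circ> f^^n" by (simp add: funpow_add[symmetric])
    then have "(f^^m) x = (f^^(m-n)) ((f^^n) x)" "(f^^m) y = (f^^(m-n)) ((f^^n) y)"
      by simp_all
    then show "dist ((f^^m) x) ((f^^m) y) = 0" using assms(4) by simp
  qed
  then have "(\<lambda>m. dist ((f^^m) x) ((f^^m) y)) \<longlonglongrightarrow> 0" by (rule tendsto_eventually)
  ultimately show False unfolding Asy_def by auto
qed

lemma funpow_mod:
  assumes "(f^^k) a = a"
  shows "(f^^n) a = (f^^(n mod k)) a"
proof -
  have per: "(f^^(k*q)) a = a" for q
  proof (induction q)
    case 0 then show ?case by simp
  next
    case (Suc q)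
    have "(f^^(k*Suc q)) a = (f^^k) ((f^^(k*q)) a)" by (simp add: funpow_add)
    then show ?case using Suc assms by simp
  qed
  have "f^^n = f^^(n mod k) \<circ> f^^(k * (n div k))" by (simp add: funpow_add[symmetric])
  then have "(f^^n) a = (f^^(n mod k)) ((f^^(k * (n div k))) a)" by simp
  then show ?thesis using per by simp
qed

lemma periodic_unique:
  fixes f :: "'a::metric_space \<Rightarrow> 'a"
  assumes sc: "synd_scrambled f S" and ab: "a \<in> S" "b \<in> S" and k: "k \<ge> 1"
    and pa: "(f^^k) a = a" and pb: "(f^^k) b = b"
  shows "a = b"
proof (rule ccontr)
  assume ne: "a \<noteq> b"
  define D where "D = (\<lambda>i. dist ((f^^i) a) ((f^^i) b)) ` {..<k}"
  have "dist a b \<in> D" unfolding D_def using k by (intro image_eqI[of _ _ 0]) auto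
  then have finD: "finite D" "D \<noteq> {}" by (auto simp: D_def)
  have posD: "\<forall>d\<in>D. d > 0"
  proof
    fix d assume "d \<in> D"
    then obtain i where "d = dist ((f^^i) a) ((f^^i) b)" by (auto simp: D_def)
    moreover have "(f^^i) a \<noteq> (f^^i) b" using inj_iter[OF sc ab] ne by blast
    ultimately show "d > 0" by simp
  qed
  define \<delta> where "\<delta> = Min D"
  have \<delta>: "\<delta> > 0" using finD posD by (simp add: \<delta>_def)
  have ge: "dist ((f^^n) a) ((f^^n) b) \<ge> \<delta>" for n
  proof -
    have "dist ((f^^n) a) ((f^^n) b) = dist ((f^^(n mod k)) a) ((f^^(n mod k)) b)"
      using funpow_mod[OF pa, of n] funpow_mod[OF pb, of n] by simp
    moreover have "dist ((f^^(n mod k)) a) ((f^^(n mod k)) b) \<in> D" using k by (auto simp: D_def)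
    ultimately show ?thesis using finD unfolding \<delta>_def by simp
  qed
  have "(a,b) \<in> SProx f" using sc ab ne unfolding synd_scrambled_def by blast
  then have "syndetic {n. dist ((f^^n) a) ((f^^n) b) < \<delta>}" using \<delta> unfolding SProx_def by auto
  moreover have "{n. dist ((f^^n) a) ((f^^n) b) < \<delta>} = {}" using ge by (auto simp: not_less[symmetric])
  moreover have "thick UNIV" unfolding thick_def by auto
  ultimately show False unfolding syndetic_def by auto
qed

lemma cantor_two:
  assumes "cantor_set K" "open W" "W \<inter> K \<noteq> {}"
  shows "\<exists>a1 a2. a1 \<in> W \<inter> K \<and> a2 \<in> W \<inter> K \<and> a1 \<noteq> a2"
proof -
  obtain a where a: "a \<in> W" "a \<in> K" using assms by auto
  then have "a islimpt K" using assms(1) unfolding cantor_set_def by auto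
  then obtain b where "b \<in> K" "b \<in> W" "b \<noteq> a" using a assms(2) by (meson islimptE)
  then show ?thesis using a by blast
qed

lemma cantor_image:
  assumes "cantor_set C" "continuous_on C h" "inj_on h C"
  shows "cantor_set (h ` C)"
  unfolding cantor_set_def
proof (intro conjI ballI)
  have cC: "compact C" "C \<noteq> {}" using assms(1) unfolding cantor_set_def by auto
  show "h ` C \<noteq> {}" using cC by auto
  show "compact (h ` C)" using compact_continuous_image[OF assms(2) cC(1)] .
next
  fix y assume "y \<in> h ` C"
  then obtain a where a: "a \<in> C" "y = h a" by auto
  have al: "a islimpt C" using a assms(1) unfolding cantor_set_def by auto
  show "y islimpt h ` C" unfolding islimpt_approachable
  proof (intro allI impI)
    fix e :: real assume "e > 0"
    then obtain d where d: "d > 0" "\<forall>x'\<in>C. dist x' a < d \<longrightarrow> dist (h x') (h a) < e"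
      using assms(2) a unfolding continuous_on_iff by blast
    then obtain a' where "a' \<in> C" "a' \<noteq> a" "dist a' a < d" using al unfolding islimpt_approachable by blast
    moreover then have "h a' \<noteq> h a" using assms(3) a by (meson inj_onD)
    ultimately show "\<exists>x'\<in>h ` C. x' \<noteq> y \<and> dist x' y < e" using d a by blast
  qed
next
  have cC: "compact C" using assms(1) unfolding cantor_set_def by auto
  define h' where "h' = inv_into C h"
  have hinv: "\<forall>x\<in>C. h' (h x) = x" using assms(3) by (simp add: h'_def)
  have ch': "continuous_on (h ` C) h'" by (rule continuous_on_inv[OF assms(2) cC hinv])
  show "totally_disconnected_set (h ` C)" unfolding totally_disconnected_set_def
  proof (intro allI impI)
    fix Z assume Z: "Z \<subseteq> h ` C" "connected Z"
    then have "connected (h' ` Z)" using ch' connected_continuous_image continuous_on_subset by blast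
    moreover have "h' ` Z \<subseteq> C" using Z hinv by auto
    ultimately obtain a where "h' ` Z \<subseteq> {a}"
      using assms(1) unfolding cantor_set_def totally_disconnected_set_def by blast
    then have "h ` h' ` Z \<subseteq> {h a}" by auto
    moreover have "h ` h' ` Z = Z" using Z hinv by force
    ultimately show "\<exists>a. Z \<subseteq> {a}" by auto
  qed
qed



theorem lemma3p11:
  fixes X :: "'a::metric_space set" and f :: "'a \<Rightarrow> 'a" and S K :: "'a set"
  assumes "compact X" and "continuous_on X f" and "f ` X \<subseteq> X"
    and "S \<subseteq> X" and "synd_scrambled f S" and "f ` S \<subseteq> S"
    and "cantor_set K" and "K \<subseteq> S"
    and "\<And>U. openin (top_of_set X) U \<Longrightarrow> U \<noteq> {} \<Longrightarrow>
           \<exists>n. (f ^^ n) ` K \<subseteq> (f ^^ n) ` U"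
  shows "\<exists>T. T \<subseteq> X \<and> X \<subseteq> closure T \<and> mycielski_set T \<and> f ` T \<subseteq> T \<and>
             synd_scrambled f T \<and>
             (\<forall>\<epsilon>. synd_eps_scrambled f \<epsilon> S \<longrightarrow> synd_eps_scrambled f \<epsilon> T)"
proof -
  have iter: "continuous_on X (f^^n) \<and> (f^^n) ` X \<subseteq> X" for n using iter_cont[OF assms(2,3)] by blast
  have iterS: "(f^^n) ` S \<subseteq> S" for n using iter_sub[OF assms(6)] .
  have injS: "x = y" if "x \<in> S" "y \<in> S" "(f^^n) x = (f^^n) y" for n x y
    using inj_iter[OF assms(5) that] .
  have KX: "K \<subseteq> X" using assms(4,8) by auto
  have cK: "compact K" "K \<noteq> {}" and perfK: "\<And>a. a \<in> K \<Longrightarrow> a islimpt K"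
    using assms(7) unfolding cantor_set_def by auto
  have contK: "continuous_on K (f^^k)" for k using iter KX continuous_on_subset by blast
  define G where "G k = {(a,b). a \<in> K \<and> b \<in> K \<and> a = (f^^k) b}" for k
  define H where "H k = {(a,b). a \<in> K \<and> b \<in> K \<and> (f^^k) a = a}" for k
  have ndG: "nd K (G k)" for k
    unfolding nd_def
  proof (intro allI impI)
    fix W W' :: "'a set" assume W: "open W" "open W'" "W \<inter> K \<noteq> {}" "W' \<inter> K \<noteq> {}"
    obtain b where b: "b \<in> W'" "b \<in> K" using W by auto
    obtain a where a: "a \<in> W" "a \<in> K" "a \<noteq> (f^^k) b"
      using cantor_two[OF assms(7) W(1) W(3)] by blast
    define d where "d = dist a ((f^^k) b)"
    have d: "d > 0" using a by (simp add: d_def)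
    have "\<forall>e>0. \<exists>\<delta>>0. \<forall>z\<in>K. dist z b < \<delta> \<longrightarrow> dist ((f^^k) z) ((f^^k) b) < e"
      using contK[of k] b unfolding continuous_on_iff by blast
    moreover have "d/3 > 0" using d by simp
    ultimately obtain \<delta> where \<delta>: "\<delta> > 0" "\<forall>z\<in>K. dist z b < \<delta> \<longrightarrow> dist ((f^^k) z) ((f^^k) b) < d/3"
      by blast
    define V where "V = W \<inter> ball a (d/3)"
    define V' where "V' = W' \<inter> ball b (\<delta>/2)"
    have cV: "closure V \<subseteq> cball a (d/3)" by (rule closure_minimal) (auto simp: V_def)
    have cV': "closure V' \<subseteq> cball b (\<delta>/2)" by (rule closure_minimal) (auto simp: V'_def)
    have "(closure V \<times> closure V') \<inter> G k = {}"
    proof (rule ccontr)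
      assume "(closure V \<times> closure V') \<inter> G k \<noteq> {}"
      then obtain u z where uz: "u \<in> closure V" "z \<in> closure V'" "(u,z) \<in> G k" by auto
      then have u: "dist a u \<le> d/3" and z: "dist b z \<le> \<delta>/2" "z \<in> K" and uf: "u = (f^^k) z"
        using cV cV' by (auto simp: G_def)
      have "dist z b < \<delta>" using z \<delta> by (simp add: dist_commute)
      then have "dist ((f^^k) z) ((f^^k) b) < d/3" using \<delta> z by blast
      then have "dist u ((f^^k) b) < d/3" using uf by simp
      then have "dist a ((f^^k) b) < 2*d/3" using dist_triangle[of a "(f^^k) b" u] u by linarith
      then show False using d_def d by simp
    qed
    moreover have "a \<in> V" "b \<in> V'" using a b d \<delta> by (auto simp: V_def V'_def)
    ultimately show "\<exists>V V'. open V \<and> open V' \<and> V \<subseteq> W \<and> V' \<subseteq> W' \<and> V \<inter> K \<noteq> {} \<and> V' \<inter> K \<noteq> {} \<and>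
       (closure V \<times> closure V') \<inter> G k = {}"
      using W a b by (intro exI[of _ V] exI[of _ V']) (auto simp: V_def V'_def)
  qed
  have ndH: "nd K (H k)" if k: "k \<ge> 1" for k
    unfolding nd_def
  proof (intro allI impI)
    fix W W' :: "'a set" assume W: "open W" "open W'" "W \<inter> K \<noteq> {}" "W' \<inter> K \<noteq> {}"
    obtain a1 a2 where a12: "a1 \<in> W \<inter> K" "a2 \<in> W \<inter> K" "a1 \<noteq> a2"
      using cantor_two[OF assms(7) W(1) W(3)] by blast
    have "\<exists>a. a \<in> W \<and> a \<in> K \<and> (f^^k) a \<noteq> a"
    proof (rule ccontr)
      assume "\<not> ?thesis"
      then have "(f^^k) a1 = a1" "(f^^k) a2 = a2" using a12 by auto
      then show False using periodic_unique[OF assms(5) _ _ k] a12 assms(8) by blast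
    qed
    then obtain a where a: "a \<in> W" "a \<in> K" "(f^^k) a \<noteq> a" by blast
    define d where "d = dist ((f^^k) a) a"
    have d: "d > 0" using a by (simp add: d_def)
    have "\<forall>e>0. \<exists>\<delta>>0. \<forall>z\<in>K. dist z a < \<delta> \<longrightarrow> dist ((f^^k) z) ((f^^k) a) < e"
      using contK[of k] a unfolding continuous_on_iff by blast
    moreover have "d/3 > 0" using d by simp
    ultimately obtain \<delta> where \<delta>: "\<delta> > 0" "\<forall>z\<in>K. dist z a < \<delta> \<longrightarrow> dist ((f^^k) z) ((f^^k) a) < d/3"
      by blast
    define r where "r = min \<delta> (d/3) / 2"
    have r: "r > 0" "r < \<delta>" "r \<le> d/3" using \<delta> d by (auto simp: r_def)
    define V where "V = W \<inter> ball a r"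
    have cV: "closure V \<subseteq> cball a r" by (rule closure_minimal) (auto simp: V_def)
    have "(closure V \<times> closure W') \<inter> H k = {}"
    proof (rule ccontr)
      assume "(closure V \<times> closure W') \<inter> H k \<noteq> {}"
      then obtain u z where uz: "u \<in> closure V" "(u,z) \<in> H k" by auto
      then have u: "dist a u \<le> r" "u \<in> K" "(f^^k) u = u" using cV by (auto simp: H_def)
      have "dist u a < \<delta>" using u r by (simp add: dist_commute)
      then have "dist ((f^^k) u) ((f^^k) a) < d/3" using \<delta> u by blast
      then have "dist ((f^^k) a) a < 2*d/3"
        using dist_triangle[of "(f^^k) a" a u] u r by (simp add: dist_commute)
      then show False using d_def d by simp
    qed
    moreover have "a \<in> V" using a r by (auto simp: V_def)
    ultimately show "\<exists>V V'. open V \<and> open V' \<and> V \<subseteq> W \<and> V' \<subseteq> W' \<and> V \<inter> K \<noteq> {} \<and> V' \<inter> K \<noteq> {} \<and>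
       (closure V \<times> closure V') \<inter> H k = {}"
      using W a by (intro exI[of _ V] exI[of _ W']) (auto simp: V_def)
  qed
  define R where "R j = G (Suc j) \<union> H (Suc j)" for j
  have ndR: "nd (id ` K) (R j)" for j
  proof -
    have "nd K (H (Suc j))" by (rule ndH) simp
    then have "nd K (R j)" unfolding R_def by (rule nd_Un[OF ndG])
    then show ?thesis by simp
  qed
  interpret fK: fus K id
    by unfold_locales (use cK perfK in \<open>auto intro: continuous_on_id\<close>)
  have exKs: "\<exists>Ks::nat \<Rightarrow> 'a set. (\<forall>j. cantor_set (Ks j) \<and> Ks j \<subseteq> K) \<and> (\<forall>i j. i \<noteq> j \<longrightarrow> Ks i \<inter> Ks j = {}) \<and>
    (\<forall>x\<in>\<Union>(range Ks). \<forall>y\<in>\<Union>(range Ks). x \<noteq> y \<longrightarrow> id x \<noteq> id y \<and> (\<forall>k. (id x, id y) \<notin> R k))"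
    by (rule fK.fusion[OF ndR])
  then obtain Ks :: "nat \<Rightarrow> 'a set" where KsA: "(\<forall>j. cantor_set (Ks j) \<and> Ks j \<subseteq> K) \<and> (\<forall>i j. i \<noteq> j \<longrightarrow> Ks i \<inter> Ks j = {}) \<and>
    (\<forall>x\<in>\<Union>(range Ks). \<forall>y\<in>\<Union>(range Ks). x \<noteq> y \<longrightarrow> id x \<noteq> id y \<and> (\<forall>k. (id x, id y) \<notin> R k))" ..
  note Ks = conjunct1[OF KsA] conjunct1[OF conjunct2[OF KsA]] conjunct2[OF conjunct2[OF KsA]]
  define K' where "K' = \<Union>(range Ks)"
  have K'K: "K' \<subseteq> K" using Ks(1) by (auto simp: K'_def)
  have noorb: "a \<noteq> (f^^k) a'" if aa: "a \<in> K'" "a' \<in> K'" and k: "k \<ge> 1" for a a' k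
  proof
    assume eq: "a = (f^^k) a'"
    obtain j where j: "k = Suc j" using k by (cases k) auto
    show False
    proof (cases "a = a'")
      case False
      then have "(a,a') \<in> R j" using eq aa K'K j by (auto simp: R_def G_def)
      then show False using Ks(3) aa False unfolding K'_def by auto
    next
      case True
      obtain i where i: "a \<in> Ks i" using aa by (auto simp: K'_def)
      then have "a islimpt Ks i" using Ks(1) unfolding cantor_set_def by blast
      then obtain b where b: "b \<in> Ks i" "b \<noteq> a" by (meson UNIV_I islimptE open_UNIV)
      then have "b \<in> K'" by (auto simp: K'_def)
      then have "(a,b) \<in> R j" using eq True aa K'K j by (auto simp: R_def H_def)
      then show False using Ks(3) aa b \<open>b \<in> K'\<close> unfolding K'_def by auto
    qed
  qed
  have Xne: "X \<noteq> {}" using KX cK by auto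
  have "\<forall>n. \<exists>P. finite P \<and> P \<subseteq> X \<and> X \<subseteq> (\<Union>x\<in>P. ball x (1 / real (Suc n)))"
    using seq_compact_imp_totally_bounded[OF compact_imp_seq_compact[OF assms(1)]] by simp
  then have "\<exists>P. \<forall>n. finite (P n) \<and> P n \<subseteq> X \<and> X \<subseteq> (\<Union>x\<in>P n. ball x (1 / real (Suc n)))"
    by (rule choice)
  then obtain P where PA: "\<forall>n. finite (P n) \<and> P n \<subseteq> X \<and> X \<subseteq> (\<Union>x\<in>P n. ball x (1 / real (Suc n)))" ..
  have P: "finite (P n) \<and> P n \<subseteq> X \<and> X \<subseteq> (\<Union>x\<in>P n. ball x (1 / real (Suc n)))" for n
    using PA by blast
  define Idx where "Idx = (SIGMA n:UNIV. P n)"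
  have cP: "countable (P n)" for n using P[of n] countable_finite by blast
  have cIdx: "countable Idx" unfolding Idx_def using cP by (intro countable_SIGMA) auto
  have neIdx: "Idx \<noteq> {}"
  proof -
    obtain x where "x \<in> X" using Xne by auto
    then obtain p where "p \<in> P 0" using P[of 0] by auto
    then show ?thesis by (auto simp: Idx_def)
  qed
  define ctr where "ctr i = snd (from_nat_into Idx i)" for i
  define rad where "rad i = 1 / real (Suc (fst (from_nat_into Idx i)))" for i
  have ctrX: "ctr i \<in> X" for i
  proof -
    have "from_nat_into Idx i \<in> Idx" using from_nat_into[OF neIdx] .
    then have "snd (from_nat_into Idx i) \<in> P (fst (from_nat_into Idx i))"
      by (cases "from_nat_into Idx i") (auto simp: Idx_def)
    then show ?thesis using P unfolding ctr_def by blast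
  qed
  have rad: "rad i > 0" for i by (simp add: rad_def)
  have cover: "\<exists>i. ball (ctr i) (rad i) \<subseteq> ball x e" if xe: "x \<in> X" "e > 0" for x e
  proof -
    obtain n where n: "inverse (real (Suc n)) < e/2" using reals_Archimedean[of "e/2"] xe by auto
    obtain p where p: "p \<in> P n" "x \<in> ball p (1 / real (Suc n))" using P[of n] xe by auto
    have "(n,p) \<in> Idx" using p by (auto simp: Idx_def)
    then obtain i where i: "from_nat_into Idx i = (n,p)"
      using range_from_nat_into[OF neIdx cIdx] by (metis rangeE)
    have "ball (ctr i) (rad i) \<subseteq> ball x e"
    proof
      fix z assume "z \<in> ball (ctr i) (rad i)"
      then have "dist p z < 1 / real (Suc n)" using i by (simp add: ctr_def rad_def)
      moreover have "dist p x < 1 / real (Suc n)" using p by simp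
      ultimately have "dist x z < e" using dist_triangle[of x z p] n
        by (simp add: dist_commute inverse_eq_divide)
      then show "z \<in> ball x e" by simp
    qed
    then show ?thesis by blast
  qed
  define V where "V i = X \<inter> ball (ctr i) (rad i / 2)" for i
  have "\<exists>n. (f^^n) ` K \<subseteq> (f^^n) ` V i" for i
  proof (rule assms(9))
    show "openin (top_of_set X) (V i)" unfolding V_def by auto
    have "ctr i \<in> V i" using ctrX[of i] rad[of i] by (simp add: V_def)
    then show "V i \<noteq> {}" by blast
  qed
  then obtain nn where nn: "\<And>i. (f^^nn i) ` K \<subseteq> (f^^nn i) ` V i" by metis
  define Fi where "Fi i = (X \<inter> cball (ctr i) (rad i / 2)) \<inter> (f^^nn i) -` ((f^^nn i) ` Ks i)" for i
  have exC: "\<exists>C. cantor_set C \<and> C \<subseteq> Fi i \<and> inj_on (f^^nn i) C" for i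
  proof -
    define g where "g = f^^nn i"
    define B where "B = X \<inter> cball (ctr i) (rad i / 2)"
    have cB: "compact B" unfolding B_def using compact_Int_closed[OF assms(1) closed_cball] .
    have cgB: "continuous_on B g" unfolding g_def B_def using iter continuous_on_subset by blast
    have KsS: "Ks i \<subseteq> S" using Ks(1) assms(8) by blast
    have injKs: "inj_on g (Ks i)" using injS KsS unfolding g_def by (meson inj_onI subsetD)
    have cKs: "continuous_on (Ks i) g" using contK Ks(1) continuous_on_subset unfolding g_def by blast
    have cant: "cantor_set (g ` Ks i)" using cantor_image[OF _ cKs injKs] Ks(1) by blast
    have cimg: "compact (g ` Ks i)" using cant unfolding cantor_set_def by blast
    have FiB: "Fi i = B \<inter> g -` (g ` Ks i)" unfolding Fi_def B_def g_def by simp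
    have cFi: "compact (Fi i)" unfolding FiB
      using closedin_compact[OF cB continuous_closedin_preimage[OF cgB compact_imp_closed[OF cimg]]] .
    have img: "g ` Fi i = g ` Ks i"
    proof
      show "g ` Fi i \<subseteq> g ` Ks i" unfolding FiB by auto
      show "g ` Ks i \<subseteq> g ` Fi i"
      proof
        fix y assume "y \<in> g ` Ks i"
        then obtain a where a: "a \<in> Ks i" "y = g a" by auto
        then have "a \<in> K" using Ks(1) by blast
        then have "g a \<in> g ` V i" using nn[of i] unfolding g_def by blast
        then obtain v where "v \<in> V i" "g v = g a" by auto
        then have "v \<in> Fi i" using a unfolding FiB B_def V_def by auto
        then show "y \<in> g ` Fi i" using a \<open>g v = g a\<close> by (metis image_eqI)
      qed
    qed
    have cgF: "continuous_on (Fi i) g" using cgB continuous_on_subset unfolding FiB by blast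
    have neF: "Fi i \<noteq> {}" using img cant unfolding cantor_set_def by auto
    interpret fi: fus "Fi i" g
      by unfold_locales (use cFi cgF neF img cant in \<open>auto simp: cantor_set_def\<close>)
    have exCs: "\<exists>Cs::nat \<Rightarrow> 'a set. (\<forall>j. cantor_set (Cs j) \<and> Cs j \<subseteq> Fi i) \<and> (\<forall>i j. i \<noteq> j \<longrightarrow> Cs i \<inter> Cs j = {}) \<and>
      (\<forall>x\<in>\<Union>(range Cs). \<forall>y\<in>\<Union>(range Cs). x \<noteq> y \<longrightarrow> g x \<noteq> g y \<and> (\<forall>k::nat. (g x, g y) \<notin> {}))"
      by (rule fi.fusion[OF nd_empty])
    then obtain Cs :: "nat \<Rightarrow> 'a set" where CsA: "(\<forall>j. cantor_set (Cs j) \<and> Cs j \<subseteq> Fi i) \<and> (\<forall>i j. i \<noteq> j \<longrightarrow> Cs i \<inter> Cs j = {}) \<and>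
      (\<forall>x\<in>\<Union>(range Cs). \<forall>y\<in>\<Union>(range Cs). x \<noteq> y \<longrightarrow> g x \<noteq> g y \<and> (\<forall>k::nat. (g x, g y) \<notin> {}))" ..
    note Cs = conjunct1[OF CsA] conjunct2[OF conjunct2[OF CsA]]
    have "inj_on g (Cs 0)" using Cs(2) by (intro inj_onI) blast
    then show ?thesis using Cs(1) unfolding g_def by blast
  qed
  then obtain CC where CC: "\<And>i. cantor_set (CC i) \<and> CC i \<subseteq> Fi i \<and> inj_on (f^^nn i) (CC i)" by metis
  have CCX: "CC i \<subseteq> X" for i using CC[of i] unfolding Fi_def by blast
  have rep: "\<exists>a\<in>Ks i. \<forall>n\<ge>nn i. (f^^n) c = (f^^n) a" if c: "c \<in> CC i" for c i
  proof -
    have "c \<in> Fi i" using c CC by blast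
    then obtain a where a: "a \<in> Ks i" "(f^^nn i) c = (f^^nn i) a" unfolding Fi_def by auto
    have "(f^^n) c = (f^^n) a" if "n \<ge> nn i" for n
    proof -
      have "n = (n - nn i) + nn i" using that by simp
      then have "f^^n = (f^^(n - nn i)) \<circ> (f^^nn i)" by (metis funpow_add)
      then show ?thesis using a by simp
    qed
    then show ?thesis using a by blast
  qed
  have KsS: "Ks i \<subseteq> S" for i using Ks(1) assms(8) by blast
  have injm: "inj_on (f^^m) (CC i)" for m i
  proof (rule inj_onI)
    fix c c' assume cc: "c \<in> CC i" "c' \<in> CC i" "(f^^m) c = (f^^m) c'"
    obtain a where a: "a \<in> Ks i" "\<forall>n\<ge>nn i. (f^^n) c = (f^^n) a" using rep cc by blast
    obtain a' where a': "a' \<in> Ks i" "\<forall>n\<ge>nn i. (f^^n) c' = (f^^n) a'" using rep cc by blast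
    have "(f^^(nn i + m)) c = (f^^(nn i + m)) c'" using cc(3) by (simp add: funpow_add)
    then have "(f^^(nn i + m)) a = (f^^(nn i + m)) a'" using a a' by simp
    then have "a = a'" using injS KsS a a' by blast
    then have "(f^^nn i) c = (f^^nn i) c'" using a a' by simp
    then show "c = c'" using CC cc by (meson inj_onD)
  qed
  define T where "T = (\<Union>i. \<Union>m. (f^^m) ` CC i)"
  have pair: "(x,y) \<in> SProx f - Asy f \<and> (\<exists>p\<in>S. \<exists>q\<in>S. p \<noteq> q \<and>
       limsup (\<lambda>n. ereal (dist ((f^^n) x) ((f^^n) y))) = limsup (\<lambda>n. ereal (dist ((f^^n) p) ((f^^n) q))))"
    if xy: "x \<in> T" "y \<in> T" "x \<noteq> y" for x y
  proof -
    obtain i m c where x: "c \<in> CC i" "x = (f^^m) c" using xy unfolding T_def by blast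
    obtain j m' c' where y: "c' \<in> CC j" "y = (f^^m') c'" using xy unfolding T_def by blast
    obtain a where a: "a \<in> Ks i" "\<forall>n\<ge>nn i. (f^^n) c = (f^^n) a" using rep x by blast
    obtain a' where a': "a' \<in> Ks j" "\<forall>n\<ge>nn j. (f^^n) c' = (f^^n) a'" using rep y by blast
    define p where "p = (f^^m) a"
    define q where "q = (f^^m') a'"
    have aS: "a \<in> S" "a' \<in> S" using a a' KsS by auto
    have pS: "p \<in> S" "q \<in> S" using iterS aS unfolding p_def q_def by auto
    have xp: "\<forall>n\<ge>max (nn i) (nn j). (f^^n) x = (f^^n) p"
    proof (intro allI impI)
      fix n assume "n \<ge> max (nn i) (nn j)"
      then have "n + m \<ge> nn i" by simp
      then have "(f^^(n+m)) c = (f^^(n+m)) a" using a by blast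
      then show "(f^^n) x = (f^^n) p" unfolding x p_def by (simp add: funpow_add)
    qed
    have yq: "\<forall>n\<ge>max (nn i) (nn j). (f^^n) y = (f^^n) q"
    proof (intro allI impI)
      fix n assume "n \<ge> max (nn i) (nn j)"
      then have "n + m' \<ge> nn j" by simp
      then have "(f^^(n+m')) c' = (f^^(n+m')) a'" using a' by blast
      then show "(f^^n) y = (f^^n) q" unfolding y q_def by (simp add: funpow_add)
    qed
    have aK': "a \<in> K'" "a' \<in> K'" using a a' by (auto simp: K'_def)
    have "p \<noteq> q"
    proof
      assume pq: "p = q"
      consider "m = m'" | "m < m'" | "m' < m" by linarith
      then show False
      proof cases
        case 1
        then have "a = a'" using pq injS aS unfolding p_def q_def by blast
        then have "i = j" using a a' Ks(2) by blast
        then have "(f^^nn i) c = (f^^nn i) c'" using a a' \<open>a = a'\<close> by simp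
        then have "c = c'" using CC y x \<open>i = j\<close> by (meson inj_onD)
        then show False using xy x y 1 \<open>i = j\<close> by simp
      next
        case 2
        define k where "k = m' - m"
        have "m' = m + k" using 2 by (simp add: k_def)
        then have "q = (f^^m) ((f^^k) a')" unfolding q_def by (simp add: funpow_add)
        moreover have "(f^^k) a' \<in> S" using iterS aS by blast
        ultimately have "a = (f^^k) a'" using pq injS aS unfolding p_def by blast
        moreover have "k \<ge> 1" using 2 by (simp add: k_def)
        ultimately show False using noorb aK' by blast
      next
        case 3
        define k where "k = m - m'"
        have "m = m' + k" using 3 by (simp add: k_def)
        then have "p = (f^^m') ((f^^k) a)" unfolding p_def by (simp add: funpow_add)
        moreover have "(f^^k) a \<in> S" using iterS aS by blast
        ultimately have "a' = (f^^k) a" using pq injS aS unfolding q_def by metis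
        moreover have "k \<ge> 1" using 3 by (simp add: k_def)
        ultimately show False using noorb aK' by blast
      qed
    qed
    then have "(p,q) \<in> SProx f - Asy f" using assms(5) pS unfolding synd_scrambled_def by blast
    then show ?thesis using transfer[OF _ xp yq] pS \<open>p \<noteq> q\<close> by blast
  qed
  have TX: "T \<subseteq> X" unfolding T_def using CCX iter by blast
  have dense: "X \<subseteq> closure T"
  proof
    fix x assume x: "x \<in> X"
    show "x \<in> closure T" unfolding closure_approachable
    proof (intro allI impI)
      fix e :: real assume "e > 0"
      then obtain i where i: "ball (ctr i) (rad i) \<subseteq> ball x e" using cover x by blast
      obtain z where z: "z \<in> CC i" using CC[of i] unfolding cantor_set_def by blast
      then have "z \<in> cball (ctr i) (rad i / 2)" using CC[of i] unfolding Fi_def by blast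
      then have "z \<in> ball (ctr i) (rad i)" using rad[of i] by simp
      then have "dist z x < e" using i by (auto simp: dist_commute)
      moreover have "z \<in> (f^^0) ` CC i" using z by simp
      then have "z \<in> T" unfolding T_def by blast
      ultimately show "\<exists>y\<in>T. dist y x < e" by blast
    qed
  qed
  have myc: "mycielski_set T" unfolding mycielski_set_def
  proof (intro exI[of _ "(\<lambda>(i,m). (f^^m) ` CC i) ` (UNIV :: (nat \<times> nat) set)"] conjI)
    show "countable ((\<lambda>(i,m). (f^^m) ` CC i) ` (UNIV :: (nat \<times> nat) set))" by simp
    show "\<forall>C\<in>(\<lambda>(i,m). (f^^m) ` CC i) ` (UNIV :: (nat \<times> nat) set). cantor_set C"
    proof
      fix C assume "C \<in> (\<lambda>(i,m). (f^^m) ` CC i) ` (UNIV :: (nat \<times> nat) set)"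
      then obtain i m where C: "C = (f^^m) ` CC i" by auto
      have "continuous_on (CC i) (f^^m)" using continuous_on_subset[OF conjunct1[OF iter[of m]] CCX[of i]] .
      then show "cantor_set C" unfolding C using cantor_image[OF conjunct1[OF CC[of i]] _ injm[of m i]] by blast
    qed
    show "T = \<Union>((\<lambda>(i,m). (f^^m) ` CC i) ` (UNIV :: (nat \<times> nat) set))" unfolding T_def by auto
  qed
  have inv: "f ` T \<subseteq> T"
  proof
    fix z assume "z \<in> f ` T"
    then obtain i m c where "c \<in> CC i" "z = f ((f^^m) c)" unfolding T_def by blast
    then have "z = (f^^Suc m) c" by simp
    then show "z \<in> T" unfolding T_def using \<open>c \<in> CC i\<close> by blast
  qed
  have two: "\<exists>x\<in>T. \<exists>y\<in>T. x \<noteq> y"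
  proof -
    have "(f^^0) ` CC 0 = CC 0" by simp
    then have "CC 0 \<subseteq> T" unfolding T_def by blast
    moreover obtain a1 a2 where "a1 \<in> UNIV \<inter> CC 0" "a2 \<in> UNIV \<inter> CC 0" "a1 \<noteq> a2"
      using cantor_two[of "CC 0" UNIV] CC[of 0] unfolding cantor_set_def by auto
    ultimately show ?thesis by blast
  qed
  have scT: "synd_scrambled f T" unfolding synd_scrambled_def using two pair by blast
  have epsT: "synd_eps_scrambled f \<epsilon> T" if "synd_eps_scrambled f \<epsilon> S" for \<epsilon>
    unfolding synd_eps_scrambled_def
  proof (intro conjI scT ballI impI)
    fix x y assume "x \<in> T" "y \<in> T" "x \<noteq> y"
    then obtain p q where "p \<in> S" "q \<in> S" "p \<noteq> q"
      "limsup (\<lambda>n. ereal (dist ((f^^n) x) ((f^^n) y))) = limsup (\<lambda>n. ereal (dist ((f^^n) p) ((f^^n) q)))"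
      using pair by blast
    then show "ereal \<epsilon> \<le> limsup (\<lambda>n. ereal (dist ((f^^n) x) ((f^^n) y)))"
      using that unfolding synd_eps_scrambled_def by metis
  qed
  show ?thesis using TX dense myc inv scT epsT by blast
qed


end
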